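(* Let $B=2\pi/\sqrt{6}$, $F(\alpha)=\dfrac{1+e^{-\alpha}}{1+e^{-\alpha}+e^{-2\alpha}}$, and for integers $n,\ell\ge 0$ let $Q_1(n,\ell)=2n(3n+1)+3n\ell$ and $Q_2(n,\ell)=Q_1(n,\ell)+8n+4+2\ell$. Define $$I_M(\ell,N)=\sum_{n\ge 0}\left(e^{-\frac{BQ_1(n,\ell)}{2\sqrt{N}}}-e^{-\frac{BQ_2(n,\ell)}{2\sqrt{N}}}\right).$$ Then, uniformly for integers $0\le\ell\le\sqrt{N}(\log N)^2$, as $N\to\infty$, $$I_M(\ell,N)=\left(1+O\left(N^{-1/10}\right)\right)F\left(\frac{B\ell}{2\sqrt{N}}\right).$$ *)

theory Defs
  imports Complex_Main
begin

definition B_const :: real where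
  "B_const = 2 * pi / sqrt 6"

definition F_fun :: "real \<Rightarrow> real" where
  "F_fun \<alpha> = (1 + exp (- \<alpha>)) / (1 + exp (- \<alpha>) + exp (- 2 * \<alpha>))"

definition Q1 :: "nat \<Rightarrow> nat \<Rightarrow> nat" where
  "Q1 n l = 2 * n * (3 * n + 1) + 3 * n * l"

definition Q2 :: "nat \<Rightarrow> nat \<Rightarrow> nat" where
  "Q2 n l = Q1 n l + 8 * n + 4 + 2 * l"

definition I_M :: "nat \<Rightarrow> nat \<Rightarrow> real" where
  "I_M l N = (\<Sum>n. exp (- B_const * real (Q1 n l) / (2 * sqrt (real N)))
                    - exp (- B_const * real (Q2 n l) / (2 * sqrt (real N))))"

end

theory Submission
  imports Defs
begin


definition phi :: "real \<Rightarrow> real" where "phi x = (1+x)/(1+x+x^2)"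

lemma phi_lip:
  assumes "0 \<le> x" "x \<le> 1" "0 \<le> z" "z \<le> 1"
  shows "\<bar>phi z - phi x\<bar> \<le> 3 * \<bar>z - x\<bar>"
proof -
  have d1: "1+z+z^2 \<ge> 1" "1+x+x^2 \<ge> 1" using assms by auto
  have eq: "phi z - phi x = (x - z)*(x+z+x*z)/((1+z+z^2)*(1+x+x^2))"
    using d1 unfolding phi_def by (simp add: field_simps power2_eq_square)
  have "x*z \<le> 1" using assms by (simp add: mult_le_one)
  hence n: "\<bar>x+z+x*z\<bar> \<le> 3" using assms by simp
  have "\<bar>phi z - phi x\<bar> = \<bar>x - z\<bar>*\<bar>x+z+x*z\<bar>/((1+z+z^2)*(1+x+x^2))"
    using d1 by (simp add: eq abs_mult)
  also have "\<dots> \<le> \<bar>x - z\<bar>*\<bar>x+z+x*z\<bar>"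
  proof -
    have D: "1 \<le> (1+z+z^2)*(1+x+x^2)" using mult_mono[OF d1(1) d1(2)] d1 by simp
    have "\<bar>x - z\<bar>*\<bar>x+z+x*z\<bar> * 1 \<le> \<bar>x - z\<bar>*\<bar>x+z+x*z\<bar> * ((1+z+z^2)*(1+x+x^2))"
      using D by (intro mult_left_mono) auto
    thus ?thesis using D by (simp add: divide_le_eq)
  qed
  also have "\<dots> \<le> \<bar>x - z\<bar>*3" using n by (intro mult_left_mono) auto
  finally show ?thesis by (simp add: abs_minus_commute mult.commute)
qed

lemma phi_ge: assumes "0 \<le> x" "x \<le> 1" shows "phi x \<ge> 1/2"
proof -
  have p: "1+x+x^2 > 0" using assms by (smt (verit) zero_le_power2)
  have "x^2 \<le> x" using assms by (simp add: power2_eq_square mult_right_le_one_le)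
  hence "1/2 * (1+x+x^2) \<le> 1 + x" using assms by simp
  thus ?thesis unfolding phi_def using p by (simp add: field_simps)
qed

lemma lemA:
  assumes G: "G \<ge> 0" and x: "0 \<le> x" "x \<le> 1" and z: "0 \<le> z" "z \<le> 1"
    and d: "\<bar>z - x\<bar> \<le> \<delta>" and c: "1 \<le> c" "c - 1 \<le> \<epsilon>"
  shows "\<bar>G - G*z^2*c - phi x*(G - G*z^3)\<bar> \<le> 3*\<delta>*(G - G*z^3) + \<epsilon>*G"
proof -
  have pz: "(1 - z^3) * phi z = 1 - z^2"
  proof -
    have p: "1+z+z^2 > 0" using z by (smt (verit) zero_le_power2)
    have f: "1 - z^3 = (1-z)*(1+z+z^2)" by (simp add: algebra_simps power2_eq_square power3_eq_cube)
    have "(1 - z^3) * phi z = (1-z)*(1+z)" unfolding phi_def f using p by simp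
    thus ?thesis by (simp add: algebra_simps power2_eq_square)
  qed
  have eq: "G - G*z^2*c - phi x*(G - G*z^3) = G*((1-z^3)*(phi z - phi x) - z^2*(c-1))"
  proof -
    have "G*((1-z^3)*(phi z - phi x) - z^2*(c-1)) = G*((1-z^3)*phi z) - G*(1-z^3)*phi x - G*z^2*(c-1)"
      by (simp add: algebra_simps)
    also have "\<dots> = G*(1-z^2) - G*(1-z^3)*phi x - G*z^2*(c-1)" by (simp add: pz)
    finally show ?thesis by (simp add: algebra_simps)
  qed
  have z3: "0 \<le> 1 - z^3" "z^3 \<le> 1" "z^2 \<le> 1" using z by (auto simp: power_le_one)
  have "\<bar>(1-z^3)*(phi z - phi x) - z^2*(c-1)\<bar> \<le> (1-z^3)*\<bar>phi z - phi x\<bar> + z^2*(c-1)"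
    using abs_triangle_ineq4[of "(1-z^3)*(phi z - phi x)" "z^2*(c-1)"] z3 c by (simp add: abs_mult)
  also have "\<dots> \<le> (1-z^3)*(3*\<delta>) + 1*\<epsilon>"
    using phi_lip[OF x z] d z3 c by (intro add_mono mult_mono) auto
  finally have "\<bar>(1-z^3)*(phi z - phi x) - z^2*(c-1)\<bar> \<le> (1-z^3)*(3*\<delta>) + \<epsilon>" by simp
  hence "G*\<bar>(1-z^3)*(phi z - phi x) - z^2*(c-1)\<bar> \<le> G*((1-z^3)*(3*\<delta>) + \<epsilon>)"
    using G by (intro mult_left_mono) auto
  moreover have "\<bar>G - G*z^2*c - phi x*(G - G*z^3)\<bar> = G*\<bar>(1-z^3)*(phi z - phi x) - z^2*(c-1)\<bar>"
    unfolding eq using G by (simp add: abs_mult)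
  moreover have "G*((1-z^3)*(3*\<delta>) + \<epsilon>) = 3*\<delta>*(G - G*z^3) + \<epsilon>*G" by (simp add: algebra_simps)
  ultimately show ?thesis by simp
qed



lemma Q1_Suc: "real (Q1 (Suc n) l) = real (Q1 n l) + (12*real n + 8 + 3*real l)"
  unfolding Q1_def by (simp add: algebra_simps)

lemma Q2_eq: "real (Q2 n l) = real (Q1 n l) + (8*real n + 4 + 2*real l)"
  unfolding Q2_def by simp

lemma Q1_ge: "real (Q1 n l) \<ge> 6 * real n ^ 2"
  unfolding Q1_def by (simp add: power2_eq_square algebra_simps)

lemma telesc_bound:
  fixes g :: "nat \<Rightarrow> real"
  shows "(\<Sum>n<M. (4*real n+3)*(g n - g (Suc n))) = 4*(\<Sum>n<M. g n) - g 0 - (4*real M - 1)*g M"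
  by (induction M) (simp_all add: algebra_simps)

lemma core:
  fixes t :: real and l :: nat
  assumes t0: "0 < t" and t1: "t \<le> 1/144"
  shows "summable (\<lambda>n. exp(-t*real(Q1 n l)) - exp(-t*real(Q2 n l))) \<and>
    \<bar>(\<Sum>n. exp(-t*real(Q1 n l)) - exp(-t*real(Q2 n l))) - phi (exp(-t*real l))\<bar> \<le> (3+3*exp 6)*sqrt t"
proof -
  define g where "g n = exp(-t*real(Q1 n l))" for n
  define h where "h n = exp(-t*real(Q2 n l))" for n
  define x where "x = exp(-t*real l)"
  define s where "s = sqrt t"
  define q where "q = exp(-12*s)"
  have s0: "0 < s" and ts: "t = s^2" using t0 by (auto simp: s_def)
  have "s^2 \<le> (1/12)^2" using t1 ts by (simp add: power2_eq_square)
  hence s1: "s \<le> 1/12" by (rule power2_le_imp_le) simp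
  have q0: "0 < q" "q < 1" by (simp_all add: q_def s0)
  have gq: "g n \<le> exp 6 * q^n" for n
  proof -
    have "-t*real(Q1 n l) \<le> -t*(6*real n^2)" using t0 Q1_ge[of n l] by simp
    also have "\<dots> \<le> 6 - 12*s*real n"
    proof -
      have "0 \<le> 6*(s*real n - 1)^2" by simp
      thus ?thesis unfolding ts by (simp add: power2_eq_square algebra_simps)
    qed
    finally have "g n \<le> exp (6 - 12*s*real n)" unfolding g_def by simp
    also have "\<dots> = exp 6 * q^n"
      unfolding q_def exp_of_nat_mult[symmetric] by (simp add: exp_diff exp_minus field_simps)
    finally show ?thesis .
  qed
  have g0: "0 \<le> g n" for n by (simp add: g_def)
  have g1: "g n \<le> 1" for n using t0 by (simp add: g_def)
  have gz: "g 0 = 1" by (simp add: g_def Q1_def)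
  have sq: "summable (\<lambda>n. exp 6 * q^n)" using q0 by (intro summable_mult summable_geometric) simp
  have sg: "summable g"
    by (rule summable_comparison_test[OF _ sq]) (use g0 gq in auto)
  define G where "G = exp 6 / (1 - q)"
  have sumG: "(\<Sum>n<M. g n) \<le> G" for M
  proof -
    have "(\<Sum>n<M. g n) \<le> (\<Sum>n<M. exp 6 * q^n)" by (intro sum_mono gq)
    also have "\<dots> \<le> (\<Sum>n. exp 6 * q^n)" using q0 by (intro sum_le_suminf[OF sq]) auto
    also have "\<dots> = G" unfolding G_def using q0 suminf_mult[OF summable_geometric[of q]]
      by (simp add: suminf_geometric divide_simps)
    finally show ?thesis .
  qed
  have hg: "h n \<le> g n" "0 \<le> h n" for n using t0 unfolding g_def h_def Q2_eq by auto
  define T where "T n = g n - h n" for n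
  have sT: "summable T"
    by (rule summable_comparison_test[OF _ sg]) (use hg in \<open>auto simp: T_def\<close>)
  have glim: "g \<longlonglongrightarrow> 0" by (rule summable_LIMSEQ_zero[OF sg])
  have tel: "(\<lambda>n. g n - g (Suc n)) sums 1" using telescope_sums'[OF glim] gz by simp
  have dsum: "(\<lambda>n. T n - phi x * (g n - g (Suc n))) sums (suminf T - phi x * 1)"
    by (intro sums_diff summable_sums[OF sT] sums_mult tel)
  have x01: "0 \<le> x" "x \<le> 1" using t0 by (auto simp: x_def)
  have pw: "\<bar>T n - phi x * (g n - g (Suc n))\<bar> \<le> 3*(t*(4*real n+3))*(g n - g (Suc n)) + 3*t*g n" for n
  proof -
    define z where "z = exp(-t*(4*real n + 8/3 + real l))"
    define c where "c = exp(4*t/3)"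
    have z3: "z^3 = exp(-t*(12*real n + 8 + 3*real l))"
      unfolding z_def exp_of_nat_mult[symmetric] by (simp add: algebra_simps)
    have z2: "z^2*c = exp(-t*(8*real n + 4 + 2*real l))"
      unfolding z_def c_def exp_of_nat_mult[symmetric] by (simp add: algebra_simps exp_add[symmetric])
    have gS: "g (Suc n) = g n * z^3" unfolding g_def z3 by (simp add: Q1_Suc algebra_simps exp_add[symmetric])
    have hS: "h n = g n * z^2 * c" unfolding g_def h_def mult.assoc z2 by (simp add: Q2_eq algebra_simps exp_add[symmetric])
    have zx: "z = x * exp(-t*(4*real n + 8/3))" unfolding z_def x_def by (simp add: algebra_simps exp_add[symmetric])
    have e1: "exp(-t*(4*real n + 8/3)) \<le> 1" "1 - t*(4*real n + 8/3) \<le> exp(-t*(4*real n + 8/3))"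
      using t0 exp_ge_add_one_self[of "-t*(4*real n + 8/3)"] by auto
    have z01: "0 \<le> z" "z \<le> 1" using t0 by (auto simp: z_def)
    have "x - z = x * (1 - exp(-t*(4*real n + 8/3)))" unfolding zx by (simp add: algebra_simps)
    also have "\<dots> \<le> 1 * (1 - exp(-t*(4*real n + 8/3)))" using x01 e1 by (intro mult_right_mono) auto
    moreover have "t*(4*real n + 8/3) \<le> t*(4*real n + 3)" using t0 by (intro mult_left_mono) auto
    ultimately have "x - z \<le> t*(4*real n + 3)" using e1 unfolding mult_minus_left by (smt (verit))
    moreover have "z \<le> x" unfolding zx using x01 e1 by (simp add: mult_left_le)
    ultimately have d: "\<bar>z - x\<bar> \<le> t*(4*real n + 3)" by simp
    have c1: "1 \<le> c" using t0 by (simp add: c_def)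
    have "c \<le> 1 + 2*(4*t/3)" unfolding c_def using t0 t1 by (intro real_exp_bound_lemma) auto
    hence c2: "c - 1 \<le> 3*t" using t0 by simp
    have "\<bar>g n - g n*z^2*c - phi x*(g n - g n*z^3)\<bar> \<le> 3*(t*(4*real n+3))*(g n - g n*z^3) + (3*t)*g n"
      by (rule lemA[OF g0 x01 z01 d c1 c2])
    thus ?thesis unfolding T_def gS hS .
  qed
  have psum: "\<bar>\<Sum>n<M. T n - phi x * (g n - g (Suc n))\<bar> \<le> 3*t + 15*t*G" for M
  proof -
    have "\<bar>\<Sum>n<M. T n - phi x * (g n - g (Suc n))\<bar> \<le> (\<Sum>n<M. \<bar>T n - phi x * (g n - g (Suc n))\<bar>)"
      by (rule sum_abs)
    also have "\<dots> \<le> (\<Sum>n<M. 3*(t*(4*real n+3))*(g n - g (Suc n)) + 3*t*g n)"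
      by (intro sum_mono pw)
    also have "\<dots> = 3*t*(\<Sum>n<M. (4*real n+3)*(g n - g (Suc n))) + 3*t*(\<Sum>n<M. g n)"
    proof -
      have "(\<Sum>n<M. 3*(t*(4*real n+3))*(g n - g (Suc n)) + 3*t*g n) =
            (\<Sum>n<M. 3*t*((4*real n+3)*(g n - g (Suc n))) + 3*t*g n)"
        by (intro sum.cong) (simp_all add: algebra_simps)
      thus ?thesis by (simp only: sum.distrib sum_distrib_left)
    qed
    also have "(\<Sum>n<M. (4*real n+3)*(g n - g (Suc n))) \<le> 4*G + 1"
    proof -
      have "- (4*real M - 1)*g M \<le> g M" using g0[of M] by (simp add: algebra_simps)
      thus ?thesis unfolding telesc_bound using sumG[of M] g0[of 0] g1[of M] by linarith
    qed
    hence "3*t*(\<Sum>n<M. (4*real n+3)*(g n - g (Suc n))) \<le> 3*t*(4*G+1)" using t0 by simp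
    hence "3*t*(\<Sum>n<M. (4*real n+3)*(g n - g (Suc n))) + 3*t*(\<Sum>n<M. g n) \<le> 3*t*(4*G+1) + 3*t*G"
      using sumG[of M] t0 by (smt (verit) mult_left_mono)
    finally show ?thesis by (simp add: algebra_simps)
  qed
  have lim: "\<bar>suminf T - phi x\<bar> \<le> 3*t + 15*t*G"
  proof -
    have "(\<lambda>M. \<bar>\<Sum>n<M. T n - phi x * (g n - g (Suc n))\<bar>) \<longlonglongrightarrow> \<bar>suminf T - phi x * 1\<bar>"
      using dsum unfolding sums_def by (intro tendsto_rabs)
    thus ?thesis using psum by (intro LIMSEQ_le_const2) auto
  qed
  have qe: "q * exp(12*s) = 1" unfolding q_def by (simp add: exp_minus field_simps)
  have "q*(1+12*s) \<le> q*exp(12*s)" using q0 by (intro mult_left_mono exp_ge_add_one_self) auto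
  hence "q*(1+12*s) \<le> 1" using qe by simp
  hence qq: "(1-q)*(1+12*s) \<ge> 12*s" by (simp add: algebra_simps)
  have q6: "1 - q \<ge> 6*s"
  proof (rule ccontr)
    assume "\<not> ?thesis"
    hence "(1-q)*(1+12*s) < (6*s)*(1+12*s)" using s0 by (intro mult_strict_right_mono) auto
    also have "\<dots> \<le> (6*s)*2" using s0 s1 by (intro mult_left_mono) auto
    finally show False using qq by simp
  qed
  have tG: "t*G \<le> exp 6 * s / 6"
  proof -
    have "t*G = exp 6 * s^2 / (1-q)" unfolding G_def ts by simp
    also have "\<dots> \<le> exp 6 * s^2 / (6*s)" using s0 q6 by (intro divide_left_mono) auto
    also have "\<dots> = exp 6 * s / 6" using s0 by (simp add: power2_eq_square)
    finally show ?thesis .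
  qed
  have "s^2 \<le> s" using s0 s1 by (simp add: power2_eq_square mult_left_le)
  moreover have "0 \<le> exp 6 * s" using s0 by simp
  ultimately have "3*t + 15*(t*G) \<le> (3+3*exp 6)*s" using tG ts by (simp add: algebra_simps)
  hence "3*t + 15*t*G \<le> (3+3*exp 6)*s" by (simp add: mult.assoc)
  with lim have "\<bar>suminf T - phi x\<bar> \<le> (3+3*exp 6)*sqrt t" unfolding s_def by simp
  thus ?thesis using sT unfolding T_def g_def h_def x_def by simp
qed



lemma B_bounds: "0 < B_const" "B_const \<le> 4"
proof -
  show "0 < B_const" unfolding B_const_def by simp
  have "2 \<le> sqrt 6" by (rule real_le_rsqrt) simp
  moreover have "2*pi \<le> 8" using pi_less_4 by simp
  ultimately have "2*pi/sqrt 6 \<le> 8/2" by (intro frac_le) auto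
  thus "B_const \<le> 4" unfolding B_const_def by simp
qed

lemma st_lemma:
  fixes t :: real and N :: nat
  assumes N1: "real N \<ge> 1" and t2: "t \<le> 2 / sqrt (real N)" and t0: "0 < t"
  shows "sqrt t \<le> 2 * real N powr (-1/10)"
proof -
    have Np: "real N > 0" using N1 by simp
    have h: "sqrt (real N) = real N powr (1/2)" using Np by (simp add: powr_half_sqrt)
    have "2 / sqrt (real N) = 2 * inverse (real N powr (1/2))" unfolding h divide_inverse by (rule refl)
    also have "\<dots> = 2 * real N powr (-(1/2))" by (simp only: powr_minus)
    also have "\<dots> \<le> 2 * real N powr (-1/5)" using N1 by (intro mult_left_mono powr_mono) auto
    also have "real N powr (-1/5) = (real N powr (-1/10))^2"
      using Np by (simp add: power2_eq_square powr_add[symmetric])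
    finally have "t \<le> 2 * (real N powr (-1/10))^2" using t2 by simp
    hence "sqrt t \<le> sqrt (2 * (real N powr (-1/10))^2)" by simp
    also have "\<dots> = sqrt 2 * real N powr (-1/10)" by (simp add: real_sqrt_mult)
    also have "\<dots> \<le> 2 * real N powr (-1/10)"
      by (intro mult_right_mono) (auto intro!: real_le_lsqrt)
    finally show ?thesis .
qed

theorem mainTheorem8:
  shows "\<exists>C N0. \<forall>N::nat. N \<ge> N0 \<longrightarrow> (\<forall>l::nat.
            real l \<le> sqrt (real N) * (ln (real N))^2 \<longrightarrow>
            (\<exists>E. \<bar>E\<bar> \<le> C * real N powr (-1/10) \<and>
                 I_M l N = (1 + E) * F_fun (B_const * real l / (2 * sqrt (real N)))))"
proof (rule exI[of _ "4*(3+3*exp 6)"], rule exI[of _ "82944::nat"], intro allI impI)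
  fix N l :: nat
  assume N: "82944 \<le> N"
  assume "real l \<le> sqrt (real N) * (ln (real N))^2"
  define t where "t = B_const / (2*sqrt (real N))"
  have N1: "real N \<ge> 82944" using N by simp
  have Npos: "0 < N" using N by simp
  have sN: "sqrt (real N) \<ge> 288"
    by (rule real_le_rsqrt) (use N1 in simp)
  have t0: "0 < t" unfolding t_def using B_bounds sN Npos by (intro divide_pos_pos) auto
  have t2: "t \<le> 2 / sqrt (real N)" unfolding t_def using divide_right_mono[OF B_bounds(2), of "2*sqrt (real N)"] sN Npos by simp
  also have "\<dots> \<le> 2 / 288" using sN Npos by (intro divide_left_mono) auto
  finally have t1: "t \<le> 1/144" by simp
  define S where "S = (\<Sum>n. exp(-t*real(Q1 n l)) - exp(-t*real(Q2 n l)))"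
  have Sb: "\<bar>S - phi (exp(-t*real l))\<bar> \<le> (3+3*exp 6)*sqrt t"
    using core[OF t0 t1, of l] unfolding S_def by (rule conjunct2)
  have e: "- B_const * r / (2 * sqrt (real N)) = - t * r" for r unfolding t_def by simp
  have IM: "I_M l N = S" unfolding S_def I_M_def e ..
  have FF: "F_fun (B_const * real l / (2 * sqrt (real N))) = phi (exp(-t*real l))"
  proof -
    have a: "B_const * real l / (2 * sqrt (real N)) = t * real l" unfolding t_def by simp
    have b: "exp (- 2 * (t * real l)) = exp (- (t*real l))^2"
      by (simp add: power2_eq_square exp_add[symmetric])
    show ?thesis unfolding a F_fun_def phi_def b by simp
  qed
  define p where "p = phi (exp(-t*real l))"
  have p: "p \<ge> 1/2" unfolding p_def by (rule phi_ge) (use t0 in auto)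
  have st: "sqrt t \<le> 2 * real N powr (-1/10)"
    by (rule st_lemma) (use N1 t2 t0 in auto)
  show "\<exists>E. \<bar>E\<bar> \<le> 4*(3+3*exp 6) * real N powr (-1/10) \<and>
                 I_M l N = (1 + E) * F_fun (B_const * real l / (2 * sqrt (real N)))"
  proof (intro exI[of _ "(S - p)/p"] conjI)
    have "\<bar>(S - p)/p\<bar> = \<bar>S - p\<bar> / p" using p by simp
    also have "\<dots> \<le> \<bar>S - p\<bar> / (1/2)" using p by (intro divide_left_mono) auto
    also have "\<dots> \<le> 2*((3+3*exp 6)*sqrt t)" using Sb unfolding p_def by simp
    also have "\<dots> \<le> 2*((3+3*exp 6)*(2 * real N powr (-1/10)))"
      using st by (intro mult_left_mono) (auto simp: add_nonneg_nonneg)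
    finally show "\<bar>(S - p)/p\<bar> \<le> 4*(3+3*exp 6) * real N powr (-1/10)" by (simp add: algebra_simps)
    show "I_M l N = (1 + (S - p)/p) * F_fun (B_const * real l / (2 * sqrt (real N)))"
      unfolding IM FF p_def[symmetric] using p by (simp add: field_simps)
  qed
qed

end
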